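(* Let $T:[0,1]\to[0,1]$ be a uniform-distribution-preserving transformation that is continuously differentiable on an interval $(a,b)\subset[0,1]$. Then $T'(x)\neq0$ for all $x\in(a,b)$ and $T$ is strictly monotone on $(a,b)$.
   Context: $T$ is uniform-distribution-preserving if $T(U)\sim\mathcal{U}(0,1)$ whenever $U\sim\mathcal{U}(0,1)$. *)

theory Defs
  imports "HOL-Analysis.Analysis"
begin

definition unif01 :: "real measure" where
  "unif01 = uniform_measure lborel {0..1}"

text \<open>The underlying probability space for U ~ U(0,1): Lebesgue (Borel) measure on [0,1].
  Only the values of T on [0,1] matter.\<close>
definition unit_space :: "real measure" where
  "unit_space = restrict_space lborel {0..1}"

definition unif_preserving :: "(real \<Rightarrow> real) \<Rightarrow> bool" where
  "unif_preserving T \<longleftrightarrow> T \<in> borel_measurable unit_space \<and> distr unit_space borel T = unif01"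

end

theory Submission
  imports Defs
begin

lemma key:
  fixes T :: "real \<Rightarrow> real" and c d :: real
  assumes udp: "unif_preserving T"
    and cd: "c < d" "0 \<le> c" "d \<le> 1"
    and contT: "continuous_on {c..d} T"
    and bnd: "\<forall>x\<in>{c..d}. \<bar>T x - T c\<bar> \<le> (d - c) / 4"
  shows False
proof -
  define S where "S = T ` {c..d}"
  have "compact S" unfolding S_def by (rule compact_continuous_image[OF contT compact_Icc])
  hence Sb: "S \<in> sets borel" by (simp add: compact_imp_closed borel_closed)
  have meas: "T \<in> borel_measurable unit_space" and eq: "distr unit_space borel T = unif01"
    using udp unfolding unif_preserving_def by auto
  have sp: "space unit_space = {0..1}" unfolding unit_space_def by (simp add: space_restrict_space)
  have pre: "T -` S \<inter> space unit_space \<in> sets unit_space"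
    using measurable_sets[OF meas Sb] .
  have sub: "{c..d} \<subseteq> T -` S \<inter> space unit_space" using cd sp S_def by auto
  have cdsets: "{c..d} \<in> sets unit_space" unfolding unit_space_def
    using cd by (auto simp: sets_restrict_space_iff)
  have "emeasure unit_space {c..d} = emeasure lborel {c..d}"
    unfolding unit_space_def using cd by (subst emeasure_restrict_space) auto
  also have "\<dots> = ennreal (d - c)" using cd by simp
  finally have e1: "emeasure unit_space {c..d} = ennreal (d - c)" .
  have "emeasure unit_space {c..d} \<le> emeasure unit_space (T -` S \<inter> space unit_space)"
    by (rule emeasure_mono[OF sub pre])
  also have "\<dots> = emeasure (distr unit_space borel T) S"
    by (simp add: emeasure_distr[OF meas Sb])
  also have "\<dots> = emeasure unif01 S" using eq by simp
  also have "\<dots> = emeasure lborel (S \<inter> {0..1}) / emeasure lborel {0..1::real}"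
    unfolding unif01_def using Sb by (subst emeasure_uniform_measure) (auto simp: Int_commute)
  also have "\<dots> = emeasure lborel (S \<inter> {0..1})" by (simp add: divide_ennreal_def)
  also have "\<dots> \<le> emeasure lborel {T c - (d-c)/4 .. T c + (d-c)/4}"
  proof (rule emeasure_mono)
    show "S \<inter> {0..1} \<subseteq> {T c - (d-c)/4 .. T c + (d-c)/4}"
    proof
      fix y assume "y \<in> S \<inter> {0..1}"
      then obtain x where "x \<in> {c..d}" "y = T x" unfolding S_def by auto
      show "y \<in> {T c - (d-c)/4 .. T c + (d-c)/4}" proof -
        have "\<bar>T x - T c\<bar> \<le> (d-c)/4" using bnd \<open>x \<in> {c..d}\<close> by blast
        thus ?thesis using \<open>y = T x\<close> by (simp only: atLeastAtMost_iff) argo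
      qed
    qed
  qed simp
  also have "\<dots> = ennreal ((d - c) / 2)" using cd by (subst emeasure_lborel_Icc) (auto intro: arg_cong[where f=ennreal] simp: field_simps)
  finally have "ennreal (d - c) \<le> ennreal ((d - c) / 2)" using e1 by simp
  hence "d - c \<le> (d - c) / 2" using cd by (simp add: ennreal_le_iff)
  thus False using cd by simp
qed

theorem lemmaB1:
  fixes T T' :: "real \<Rightarrow> real" and a b :: real
  assumes maps: "\<forall>x\<in>{0..1}. T x \<in> {0..1}"
    and udp: "unif_preserving T"
    and ab: "0 \<le> a" "b \<le> 1"
    and deriv: "\<forall>x\<in>{a<..<b}. (T has_real_derivative T' x) (at x)"
    and cont: "continuous_on {a<..<b} T'"
  shows "(\<forall>x\<in>{a<..<b}. T' x \<noteq> 0) \<and> (strict_mono_on {a<..<b} T \<or> strict_antimono_on {a<..<b} T)"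
proof -
  have nz: "\<forall>x\<in>{a<..<b}. T' x \<noteq> 0"
  proof (intro ballI notI)
    fix x0 assume x0: "x0 \<in> {a<..<b}" and z: "T' x0 = 0"
    obtain \<delta> where dp: "\<delta> > 0" and dl: "\<forall>y\<in>{a<..<b}. dist y x0 < \<delta> \<longrightarrow> dist (T' y) (T' x0) < 1/4"
      using cont x0 unfolding continuous_on_iff by (meson zero_less_divide_1_iff zero_less_numeral)
    define c where "c = max (x0 - \<delta>/2) ((a + x0)/2)"
    define d where "d = min (x0 + \<delta>/2) ((x0 + b)/2)"
    have cd: "c < d" "a < c" "d < b" "x0 - \<delta> < c" "d < x0 + \<delta>"
      using x0 dp unfolding c_def d_def by (auto simp: max_def min_def)
    have small: "\<bar>T' y\<bar> < 1/4" if "y \<in> {c..d}" for y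
      using dl[rule_format, of y] that cd z by (auto simp: dist_real_def)
    have dT: "(T has_real_derivative T' y) (at y)" if "y \<in> {c..d}" for y
      using deriv that cd by auto
    have contT: "continuous_on {c..d} T"
      by (meson DERIV_isCont continuous_at_imp_continuous_on dT)
    have bnd: "\<forall>x\<in>{c..d}. \<bar>T x - T c\<bar> \<le> (d - c) / 4"
    proof
      fix x assume x: "x \<in> {c..d}"
      show "\<bar>T x - T c\<bar> \<le> (d - c) / 4"
      proof (cases "x = c")
        case False
        hence "c < x" using x by auto
        then obtain z where z: "c < z" "z < x" "T x - T c = (x - c) * T' z"
          using MVT2[of c x T T'] dT x by auto
        have "\<bar>T' z\<bar> < 1/4" using small z x by auto
        hence "\<bar>T x - T c\<bar> \<le> (x - c) * (1/4)" using z `c < x`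
          by (simp add: abs_mult)
        also have "\<dots> \<le> (d - c) / 4" using x by auto
        finally show ?thesis .
      qed (use cd in auto)
    qed
    show False using key[OF udp cd(1) _ _ contT bnd] cd ab by auto
  qed
  have sign: "(\<forall>x\<in>{a<..<b}. T' x > 0) \<or> (\<forall>x\<in>{a<..<b}. T' x < 0)"
  proof (rule ccontr)
    assume "\<not> ?thesis"
    then obtain x y where xy: "x \<in> {a<..<b}" "y \<in> {a<..<b}" "T' x \<le> 0" "T' y \<ge> 0"
      by auto
    have "\<exists>z\<in>{a<..<b}. T' z = 0"
    proof (cases "x \<le> y")
      case True
      have "continuous_on {x..y} T'" using cont xy by (auto intro: continuous_on_subset)
      then obtain z where "z \<ge> x" "z \<le> y" "T' z = 0" using IVT'[of T' x 0 y] True xy by auto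
      thus ?thesis using xy by auto
    next
      case False
      have "continuous_on {y..x} T'" using cont xy by (auto intro: continuous_on_subset)
      then obtain z where "z \<ge> y" "z \<le> x" "T' z = 0" using IVT2'[of T' x 0 y] False xy by auto
      thus ?thesis using xy by auto
    qed
    thus False using nz by auto
  qed
  have mono: "strict_mono_on {a<..<b} T \<or> strict_antimono_on {a<..<b} T"
    using sign
  proof
    assume pos: "\<forall>x\<in>{a<..<b}. T' x > 0"
    have "strict_mono_on {a<..<b} T"
    proof (rule strict_mono_onI)
      fix x y assume xy: "x \<in> {a<..<b}" "y \<in> {a<..<b}" "x < y"
      then obtain z where z: "x < z" "z < y" "T y - T x = (y - x) * T' z"
        using MVT2[of x y T T'] deriv by fastforce
      have "T' z > 0" using pos z xy by auto
      thus "T x < T y" using z xy by (smt (verit) mult_pos_pos)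
    qed
    thus ?thesis by simp
  next
    assume neg: "\<forall>x\<in>{a<..<b}. T' x < 0"
    have "strict_antimono_on {a<..<b} T"
    proof (rule monotone_onI)
      fix x y assume xy: "x \<in> {a<..<b}" "y \<in> {a<..<b}" "x < y"
      then obtain z where z: "x < z" "z < y" "T y - T x = (y - x) * T' z"
        using MVT2[of x y T T'] deriv by fastforce
      have "T' z < 0" using neg z xy by auto
      thus "T x > T y" using z xy by (smt (verit) mult_pos_neg)
    qed
    thus ?thesis by simp
  qed
  show ?thesis using nz mono by simp
qed

end
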